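(* Let $\lambda_*>a_1,\dots,a_n$ be real, and let $(X_0,P_0)\in T^*V_{n,r}$ be real with $P_0$ belonging to the set $$\Big\{A^{1/2}(\lambda_* )\tilde X-\tfrac12X\big(\tilde X^TA^{1/2}(\lambda_* )X+X^TA^{1/2}(\lambda_* )\tilde X\big)\ :\ X^TX=\tilde X^T\tilde X=\mathbf I_r\Big\},$$ where $X=X_0$. Let $L(\lambda_* )$ be evaluated at $(X_0,P_0)$ and choose the branch of the discrete Neumann correspondence $\mathfrak B_r$ corresponding to a partition $\{w_1,\dots,w_r\mid-w_1,\dots,-w_r\}$ of its eigenvalues such that $w_1,\dots,w_r$ are pairwise distinct, $w_i+w_j\ne0$ and $w_i+\bar w_j\ne0$ for all $i,j=1,\dots,r$. Then the trajectory obtained from $(X_0,P_0)$ by iterating this branch is real.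
   Context: $A=\mathrm{diag}(a_1,\dots,a_n)$ real with distinct $a_i$, $A(\lambda)=\lambda\mathbf I_n-A$, $A^{1/2}(\lambda_* )=\mathrm{diag}(\sqrt{\lambda_*-a_i})$ with positive square roots. $T^*V_{n,r}=\{(X,P): X^TX=\mathbf I_r,\ X^TP+P^TX=0\}$. $L(\lambda)=\begin{pmatrix} X^TA(\lambda)^{-1}P & X^TA(\lambda)^{-1}X\\ \mathbf I_r-P^TA(\lambda)^{-1}P & -P^TA(\lambda)^{-1}X\end{pmatrix}$. For a partition $\{w_1,\dots,w_r\mid-w_1,\dots,-w_r\}$ of the eigenvalues of $L(\lambda_* )$ with the $w_i$ distinct and $w_i\ne-w_j$, let $\begin{pmatrix}\Xi\\ \Upsilon\end{pmatrix}$ be the matrix of eigenvectors with eigenvalues $w_1,\dots,w_r$ and $\Gamma=\Upsilon\Xi^{-1}$; the corresponding branch of $\mathfrak B_r$ is $\tilde X=A^{-1/2}(\lambda_* )(P+X\Gamma)$, $\tilde P=-A^{1/2}(\lambda_* )X+\tilde X\Gamma$, and iteration applies the same rule to the current point (the spectrum of $L(\lambda_* )$ being preserved). *)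

theory Defs
  imports "Jordan_Normal_Form.Char_Poly"
begin

definition diagm :: "nat \<Rightarrow> (nat \<Rightarrow> complex) \<Rightarrow> complex mat" where
  "diagm n d = mat n n (\<lambda>(i,j). if i = j then d i else 0)"

definition Ainv :: "nat \<Rightarrow> (nat \<Rightarrow> real) \<Rightarrow> real \<Rightarrow> complex mat" where
  "Ainv n a lam = diagm n (\<lambda>i. complex_of_real (1 / (lam - a i)))"

definition Ahalf :: "nat \<Rightarrow> (nat \<Rightarrow> real) \<Rightarrow> real \<Rightarrow> complex mat" where
  "Ahalf n a lam = diagm n (\<lambda>i. complex_of_real (sqrt (lam - a i)))"

definition Ahalf_inv :: "nat \<Rightarrow> (nat \<Rightarrow> real) \<Rightarrow> real \<Rightarrow> complex mat" where
  "Ahalf_inv n a lam = diagm n (\<lambda>i. complex_of_real (1 / sqrt (lam - a i)))"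

definition Lmat :: "nat \<Rightarrow> (nat \<Rightarrow> real) \<Rightarrow> real \<Rightarrow> nat \<Rightarrow> complex mat \<Rightarrow> complex mat \<Rightarrow> complex mat" where
  "Lmat n a lam r X P =
     four_block_mat
       (transpose_mat X * Ainv n a lam * P) (transpose_mat X * Ainv n a lam * X)
       (1\<^sub>m r - transpose_mat P * Ainv n a lam * P) (- (transpose_mat P * Ainv n a lam * X))"

(* One step of the branch of B_r determined by the eigenvalues w_0..w_{r-1}:
   (Xi; Upsilon) is a matrix whose columns are eigenvectors of L(lam) at the current
   point with eigenvalues w_0..w_{r-1}, Gamma = Upsilon Xi^{-1} (Xi invertible), and
   X' = A^{-1/2}(P + X Gamma),  P' = -A^{1/2} X + X' Gamma. *)
definition neumann_step ::
  "nat \<Rightarrow> (nat \<Rightarrow> real) \<Rightarrow> real \<Rightarrow> nat \<Rightarrow> (nat \<Rightarrow> complex) \<Rightarrow>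
   complex mat \<times> complex mat \<Rightarrow> complex mat \<times> complex mat \<Rightarrow> bool" where
  "neumann_step n a lam r w XP XP' \<longleftrightarrow>
     (\<exists>Xi Ups Gam.
        Xi \<in> carrier_mat r r \<and> Ups \<in> carrier_mat r r \<and> Gam \<in> carrier_mat r r \<and>
        Lmat n a lam r (fst XP) (snd XP) * (Xi @\<^sub>r Ups) = (Xi @\<^sub>r Ups) * diagm r w \<and>
        invertible_mat Xi \<and> Gam * Xi = Ups \<and>
        fst XP' = Ahalf_inv n a lam * (snd XP + fst XP * Gam) \<and>
        snd XP' = - (Ahalf n a lam * fst XP) + fst XP' * Gam)"

definition real_mat :: "complex mat \<Rightarrow> bool" where
  "real_mat M \<longleftrightarrow> (\<exists>R :: real mat. M = map_mat complex_of_real R)"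

end

theory Submission
  imports Defs
begin


abbreviation cm :: "complex mat \<Rightarrow> complex mat" where "cm M \<equiv> map_mat cnj M"

lemma cm_mult: assumes "dim_col A = dim_row B" shows "cm (A * B) = cm A * cm B"
  by (rule eq_matI) (use assms in \<open>auto simp: scalar_prod_def cnj_sum intro!: sum.cong\<close>)

lemma cm_add: "A \<in> carrier_mat nr nc \<Longrightarrow> B \<in> carrier_mat nr nc \<Longrightarrow> cm (A + B) = cm A + cm B"
  by (rule eq_matI) (auto simp: plus_mat_def)

lemma cm_minus: "A \<in> carrier_mat nr nc \<Longrightarrow> B \<in> carrier_mat nr nc \<Longrightarrow> cm (A - B) = cm A - cm B"
  by (rule eq_matI) (auto simp: minus_mat_def)

lemma cm_uminus: "cm (- A) = - cm A"
  by (rule eq_matI) (auto simp: uminus_mat_def)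

lemma cm_transpose: "cm (transpose_mat A) = transpose_mat (cm A)"
  by (rule eq_matI) auto

lemma cm_one: "cm (1\<^sub>m k) = 1\<^sub>m k"
  by (rule eq_matI) auto

lemma cm_diagm_real: "cm (diagm k (\<lambda>i. complex_of_real (f i))) = diagm k (\<lambda>i. complex_of_real (f i))"
  by (rule eq_matI) (auto simp: diagm_def)

lemma transpose_diagm: "transpose_mat (diagm k d) = diagm k d"
  by (rule eq_matI) (auto simp: diagm_def)

lemma diagm_carrier[simp]: "diagm k d \<in> carrier_mat k k"
  by (simp add: diagm_def)

lemma cm_diagm: "cm (diagm k d) = diagm k (\<lambda>i. cnj (d i))"
  by (rule eq_matI) (auto simp: diagm_def)

lemma cm_of_real: "cm (map_mat complex_of_real R) = map_mat complex_of_real R"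
  by (rule eq_matI) auto

lemma real_mat_iff: "real_mat M \<longleftrightarrow> cm M = M"
proof
  assume "real_mat M" then show "cm M = M" unfolding real_mat_def using cm_of_real by auto
next
  assume h: "cm M = M"
  have "M = map_mat complex_of_real (map_mat Re M)"
  proof (rule eq_matI)
    fix i j assume ij: "i < dim_row (map_mat complex_of_real (map_mat Re M))" "j < dim_col (map_mat complex_of_real (map_mat Re M))"
    have "cnj (M $$ (i,j)) = M $$ (i,j)" using arg_cong[OF h, of "\<lambda>K. K $$ (i,j)"] ij by auto
    then show "M $$ (i,j) = map_mat complex_of_real (map_mat Re M) $$ (i,j)" using ij
      by (auto simp: complex_eq_iff)
  qed auto
  then show "real_mat M" unfolding real_mat_def by blast
qed

lemma diagm_mult_index: assumes "K \<in> carrier_mat k c" "i < k" "j < c"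
  shows "(diagm k d * K) $$ (i,j) = d i * K $$ (i,j)"
proof -
  have "(diagm k d * K) $$ (i,j) = (\<Sum>l\<in>{0..<k}. (if i = l then d i else 0) * K $$ (l,j))"
    using assms by (auto simp: diagm_def scalar_prod_def intro!: sum.cong)
  also have "\<dots> = d i * K $$ (i,j)" using assms(2)
    by (simp add: if_distrib[of "\<lambda>x. x * _"] sum.delta cong: if_cong)
  finally show ?thesis .
qed

lemma mult_diagm_index: assumes "K \<in> carrier_mat c k" "i < c" "j < k"
  shows "(K * diagm k d) $$ (i,j) = K $$ (i,j) * d j"
proof -
  have "(K * diagm k d) $$ (i,j) = (\<Sum>l\<in>{0..<k}. K $$ (i,l) * (if l = j then d j else 0))"
    using assms by (auto simp: diagm_def scalar_prod_def intro!: sum.cong)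
  also have "\<dots> = K $$ (i,j) * d j" using assms(3)
    by (simp add: if_distrib[of "\<lambda>x. _ * x"] sum.delta' cong: if_cong)
  finally show ?thesis .
qed

lemma append_rows_mult: assumes "A \<in> carrier_mat nr1 k" "B \<in> carrier_mat nr2 k" "D \<in> carrier_mat k c"
  shows "(A @\<^sub>r B) * D = (A * D) @\<^sub>r (B * D)"
proof -
  have "(A @\<^sub>r B) * D = four_block_mat A (0\<^sub>m nr1 0) B (0\<^sub>m nr2 0) * four_block_mat D (0\<^sub>m k 0) (0\<^sub>m 0 c) (0\<^sub>m 0 0)"
    using assms by (auto simp: append_rows_def intro!: arg_cong2[where f="(*)"] eq_matI)
  also have "\<dots> = four_block_mat (A * D + 0\<^sub>m nr1 0 * 0\<^sub>m 0 c) (A * 0\<^sub>m k 0 + 0\<^sub>m nr1 0 * 0\<^sub>m 0 0)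
     (B * D + 0\<^sub>m nr2 0 * 0\<^sub>m 0 c) (B * 0\<^sub>m k 0 + 0\<^sub>m nr2 0 * 0\<^sub>m 0 0)"
    by (rule mult_four_block_mat, insert assms, auto)
  also have "\<dots> = (A * D) @\<^sub>r (B * D)" using assms by (auto simp: append_rows_def)
  finally show ?thesis .
qed

lemma four_block_mult_append_rows:
  assumes "L1 \<in> carrier_mat r r" "L2 \<in> carrier_mat r r" "L3 \<in> carrier_mat r r" "L4 \<in> carrier_mat r r"
    "A \<in> carrier_mat r c" "B \<in> carrier_mat r c"
  shows "four_block_mat L1 L2 L3 L4 * (A @\<^sub>r B) = (L1 * A + L2 * B) @\<^sub>r (L3 * A + L4 * B)"
proof -
  have "four_block_mat L1 L2 L3 L4 * (A @\<^sub>r B) = four_block_mat (L1 * A + L2 * B) (L1 * 0\<^sub>m r 0 + L2 * 0\<^sub>m r 0)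
     (L3 * A + L4 * B) (L3 * 0\<^sub>m r 0 + L4 * 0\<^sub>m r 0)"
    unfolding append_rows_def using assms by (simp only: carrier_matD) (intro mult_four_block_mat, auto)
  also have "\<dots> = (L1 * A + L2 * B) @\<^sub>r (L3 * A + L4 * B)" using assms
    by (auto simp: append_rows_def)
  finally show ?thesis .
qed

lemma append_rows_inj: assumes "A \<in> carrier_mat r c" "A' \<in> carrier_mat r c" "B \<in> carrier_mat s c" "B' \<in> carrier_mat s c"
  "A @\<^sub>r B = A' @\<^sub>r B'"
  shows "A = A' \<and> B = B'"
proof
  show "A = A'"
  proof (rule eq_matI)
    fix i j assume "i < dim_row A'" "j < dim_col A'"
    then show "A $$ (i,j) = A' $$ (i,j)"
      using arg_cong[OF assms(5), of "\<lambda>K. K $$ (i,j)"] assms by (auto simp: append_rows_def)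
  qed (use assms in auto)
  show "B = B'"
  proof (rule eq_matI)
    fix i j assume "i < dim_row B'" "j < dim_col B'"
    then show "B $$ (i,j) = B' $$ (i,j)"
      using arg_cong[OF assms(5), of "\<lambda>K. K $$ (i+r,j)"] assms by (auto simp: append_rows_def)
  qed (use assms in auto)
qed



lemma skew:
  fixes M N S1 S2 Xi Ups Y Z :: "complex mat"
  assumes c: "M \<in> carrier_mat r r" "N \<in> carrier_mat r r" "S1 \<in> carrier_mat r r" "S2 \<in> carrier_mat r r"
    "Xi \<in> carrier_mat r r" "Ups \<in> carrier_mat r r" "Y \<in> carrier_mat r r" "Z \<in> carrier_mat r r"
    and t: "transpose_mat M = N" "transpose_mat N = M" "transpose_mat S1 = S1" "transpose_mat S2 = S2"
  shows "transpose_mat (M*Xi + S1*Ups) * Z - transpose_mat (S2*Xi + (-N)*Ups) * Y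
       = - (transpose_mat Xi * (S2*Y + (-N)*Z) - transpose_mat Ups * (M*Y + S1*Z))"
proof -
  have l: "transpose_mat (M*Xi + S1*Ups) * Z - transpose_mat (S2*Xi + (-N)*Ups) * Y
     = (transpose_mat Xi*(N*Z) + transpose_mat Ups*(S1*Z)) - (transpose_mat Xi*(S2*Y) + - (transpose_mat Ups*(M*Y)))"
  proof -
    have "transpose_mat (M*Xi + S1*Ups) = transpose_mat Xi * N + transpose_mat Ups * S1"
      using c t by (simp add: transpose_add[of _ r r] transpose_mult[of _ r r])
    moreover have "transpose_mat (S2*Xi + (-N)*Ups) = transpose_mat Xi * S2 + - (transpose_mat Ups * M)"
      using c t by (simp add: transpose_add[of _ r r] transpose_mult[of _ r r] transpose_uminus)
    ultimately show ?thesis using c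
      by (simp add: add_mult_distrib_mat[of _ r r])
  qed
  have r: "- (transpose_mat Xi * (S2*Y + (-N)*Z) - transpose_mat Ups * (M*Y + S1*Z))
     = - ((transpose_mat Xi*(S2*Y) + - (transpose_mat Xi*(N*Z))) - (transpose_mat Ups*(M*Y) + transpose_mat Ups*(S1*Z)))"
  proof -
    have 1: "transpose_mat Xi * (S2*Y + - (N*Z)) = transpose_mat Xi * (S2*Y) + transpose_mat Xi * (- (N*Z))"
      by (rule mult_add_distrib_mat) (use c in auto)
    have 2: "transpose_mat Ups * (M*Y + S1*Z) = transpose_mat Ups * (M*Y) + transpose_mat Ups * (S1*Z)"
      by (rule mult_add_distrib_mat) (use c in auto)
    show ?thesis using 1 2 c by simp
  qed
  show ?thesis unfolding l r
    by (rule eq_matI) (use c in auto)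
qed



lemma eig_orth:
  fixes M N S1 S2 Xi Ups Y Z :: "complex mat"
  assumes c: "M \<in> carrier_mat r r" "N \<in> carrier_mat r r" "S1 \<in> carrier_mat r r" "S2 \<in> carrier_mat r r"
    "Xi \<in> carrier_mat r r" "Ups \<in> carrier_mat r r" "Y \<in> carrier_mat r r" "Z \<in> carrier_mat r r"
    and t: "transpose_mat M = N" "transpose_mat N = M" "transpose_mat S1 = S1" "transpose_mat S2 = S2"
    and E1: "M*Xi + S1*Ups = Xi * diagm r u" and E2: "S2*Xi + (-N)*Ups = Ups * diagm r u"
    and F1: "M*Y + S1*Z = Y * diagm r v" and F2: "S2*Y + (-N)*Z = Z * diagm r v"
    and ne: "\<forall>i<r. \<forall>j<r. u i + v j \<noteq> 0"
  shows "transpose_mat Xi * Z = transpose_mat Ups * Y"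
proof -
  have sk: "transpose_mat (Xi * diagm r u) * Z - transpose_mat (Ups * diagm r u) * Y
       = - (transpose_mat Xi * (Z * diagm r v) - transpose_mat Ups * (Y * diagm r v))"
    using skew[OF c t] unfolding E1 E2 F1 F2 .
  have tx: "transpose_mat (Xi * diagm r u) = diagm r u * transpose_mat Xi"
    using c by (simp add: transpose_mult[of _ r r _ r] transpose_diagm)
  have tu: "transpose_mat (Ups * diagm r u) = diagm r u * transpose_mat Ups"
    using c by (simp add: transpose_mult[of _ r r _ r] transpose_diagm)
  define K1 where "K1 = transpose_mat Xi * Z"
  define K2 where "K2 = transpose_mat Ups * Y"
  have K: "K1 \<in> carrier_mat r r" "K2 \<in> carrier_mat r r" using c by (auto simp: K1_def K2_def)
  have eq: "diagm r u * K1 - diagm r u * K2 = - (K1 * diagm r v - K2 * diagm r v)"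
  proof -
    have a: "diagm r u * K1 - diagm r u * K2 = transpose_mat (Xi * diagm r u) * Z - transpose_mat (Ups * diagm r u) * Y"
      unfolding tx tu K1_def K2_def using c
      by (simp add: assoc_mult_mat[of "diagm r u" r r "transpose_mat Xi" r Z r]
         assoc_mult_mat[of "diagm r u" r r "transpose_mat Ups" r Y r])
    have b: "K1 * diagm r v - K2 * diagm r v = transpose_mat Xi * (Z * diagm r v) - transpose_mat Ups * (Y * diagm r v)"
      unfolding K1_def K2_def using c
      by (simp add: assoc_mult_mat[of "transpose_mat Xi" r r Z r "diagm r v" r]
         assoc_mult_mat[of "transpose_mat Ups" r r Y r "diagm r v" r])
    show ?thesis unfolding a b by (rule sk)
  qed
  show ?thesis unfolding K1_def[symmetric] K2_def[symmetric]
  proof (rule eq_matI)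
    fix i j assume ij: "i < dim_row K2" "j < dim_col K2"
    then have ij': "i < r" "j < r" using K by auto
    have "(diagm r u * K1 - diagm r u * K2) $$ (i,j) = (- (K1 * diagm r v - K2 * diagm r v)) $$ (i,j)"
      using eq by simp
    moreover have "(diagm r u * K1 - diagm r u * K2) $$ (i,j) = (diagm r u * K1) $$ (i,j) - (diagm r u * K2) $$ (i,j)"
      using K ij' by (intro index_minus_mat) (auto simp: diagm_def)
    moreover have "(- (K1 * diagm r v - K2 * diagm r v)) $$ (i,j) = - ((K1 * diagm r v) $$ (i,j) - (K2 * diagm r v) $$ (i,j))"
      using K ij' by (subst index_uminus_mat) (auto intro!: index_minus_mat simp: diagm_def)
    ultimately have "u i * K1 $$ (i,j) - u i * K2 $$ (i,j) = - (K1 $$ (i,j) * v j - K2 $$ (i,j) * v j)"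
      using K ij' by (simp add: diagm_mult_index mult_diagm_index)
    then have "(u i + v j) * (K1 $$ (i,j) - K2 $$ (i,j)) = 0" by (simp add: algebra_simps)
    then show "K1 $$ (i,j) = K2 $$ (i,j)" using ne ij' by auto
  qed (use K in auto)
qed



lemma cancel_both:
  fixes A C K1 K2 AL CR :: "complex mat"
  assumes c: "A \<in> carrier_mat r r" "C \<in> carrier_mat r r" "K1 \<in> carrier_mat r r" "K2 \<in> carrier_mat r r"
    "AL \<in> carrier_mat r r" "CR \<in> carrier_mat r r"
    and l: "AL * A = 1\<^sub>m r" and rr: "C * CR = 1\<^sub>m r"
    and e: "A * K1 * C = A * K2 * C"
  shows "K1 = K2"
proof -
  have gen: "AL * (A * K * C) * CR = K" if K: "K \<in> carrier_mat r r" for K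
  proof -
    have 1: "A * K * C = A * (K * C)" by (rule assoc_mult_mat) (use c K in auto)
    have 2: "AL * (A * (K * C)) * CR = AL * (A * (K * C) * CR)" by (rule assoc_mult_mat) (use c K in auto)
    have 3: "A * (K * C) * CR = A * (K * C * CR)" by (rule assoc_mult_mat) (use c K in auto)
    have 4: "K * C * CR = K * (C * CR)" by (rule assoc_mult_mat) (use c K in auto)
    have 5: "K * (C * CR) = K" unfolding rr using K by (rule right_mult_one_mat)
    have 6: "AL * (A * K) = AL * A * K" by (rule assoc_mult_mat[symmetric]) (use c K in auto)
    have 7: "AL * A * K = K" unfolding l using K by (rule left_mult_one_mat)
    show ?thesis unfolding 1 2 3 4 5 6 7 ..
  qed
  have "K1 = AL * (A * K1 * C) * CR" using gen[OF c(3)] by simp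
  also have "\<dots> = AL * (A * K2 * C) * CR" by (simp only: e)
  also have "\<dots> = K2" using gen[OF c(4)] .
  finally show ?thesis .
qed

lemma inv_ex:
  fixes Xi :: "complex mat"
  assumes "Xi \<in> carrier_mat r r" "invertible_mat Xi"
  shows "\<exists>XiI. XiI \<in> carrier_mat r r \<and> Xi * XiI = 1\<^sub>m r \<and> XiI * Xi = 1\<^sub>m r"
proof -
  obtain B where B: "Xi * B = 1\<^sub>m r" "B * Xi = 1\<^sub>m (dim_row B)"
    using assms unfolding invertible_mat_def inverts_mat_def by auto
  have "dim_col B = r" using arg_cong[OF B(1), of dim_col] by simp
  moreover have "dim_row B = r" using arg_cong[OF B(2), of dim_col] assms(1) by simp
  ultimately show ?thesis using B by (intro exI[of _ B]) auto
qed



lemma dim_diagm[simp]: "dim_row (diagm k d) = k" "dim_col (diagm k d) = k"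
  by (auto simp: diagm_def)

lemma step_real:
  fixes X P X' P' :: "complex mat"
  assumes X: "X \<in> carrier_mat n r" and P: "P \<in> carrier_mat n r"
    and cX: "cm X = X" and cP: "cm P = P"
    and st: "neumann_step n a lam r w (X,P) (X',P')"
    and ne1: "\<forall>i<r. \<forall>j<r. w i + w j \<noteq> 0"
    and ne2: "\<forall>i<r. \<forall>j<r. w i + cnj (w j) \<noteq> 0"
  shows "X' \<in> carrier_mat n r \<and> P' \<in> carrier_mat n r \<and> cm X' = X' \<and> cm P' = P'"
proof -
  obtain Xi Ups Gam where Xi: "Xi \<in> carrier_mat r r" and Ups: "Ups \<in> carrier_mat r r"
    and Gam: "Gam \<in> carrier_mat r r"
    and eig: "Lmat n a lam r X P * (Xi @\<^sub>r Ups) = (Xi @\<^sub>r Ups) * diagm r w"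
    and inv: "invertible_mat Xi" and GX: "Gam * Xi = Ups"
    and X'def: "X' = Ahalf_inv n a lam * (P + X * Gam)"
    and P'def: "P' = - (Ahalf n a lam * X) + X' * Gam"
    using st unfolding neumann_step_def by auto
  define B where "B = Ainv n a lam"
  have B: "B \<in> carrier_mat n n" "transpose_mat B = B" "cm B = B"
    unfolding B_def Ainv_def by (auto simp: transpose_diagm cm_diagm_real diagm_def)
  define M where "M = transpose_mat X * B * P"
  define N where "N = transpose_mat P * B * X"
  define S1 where "S1 = transpose_mat X * B * X"
  define S2 where "S2 = 1\<^sub>m r - transpose_mat P * B * P"
  have cM: "M \<in> carrier_mat r r" "N \<in> carrier_mat r r" "S1 \<in> carrier_mat r r" "S2 \<in> carrier_mat r r"
    unfolding M_def N_def S1_def S2_def using X P B by auto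
  have XB: "transpose_mat X * B \<in> carrier_mat r n" "transpose_mat P * B \<in> carrier_mat r n" using X P B by auto
  have tM: "transpose_mat M = N"
  proof -
    have "transpose_mat M = transpose_mat P * transpose_mat (transpose_mat X * B)"
      unfolding M_def by (rule transpose_mult[OF XB(1) P])
    also have "transpose_mat (transpose_mat X * B) = transpose_mat B * X"
      using transpose_mult[of "transpose_mat X" r n B n] X B by simp
    finally show ?thesis unfolding N_def using B X P
      by (simp add: assoc_mult_mat[of "transpose_mat P" r n B n X r])
  qed
  have tN: "transpose_mat N = M" using tM by auto
  have tS1: "transpose_mat S1 = S1"
  proof -
    have "transpose_mat S1 = transpose_mat X * transpose_mat (transpose_mat X * B)"
      unfolding S1_def by (rule transpose_mult[OF XB(1) X])
    also have "transpose_mat (transpose_mat X * B) = transpose_mat B * X"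
      using transpose_mult[of "transpose_mat X" r n B n] X B by simp
    finally show ?thesis unfolding S1_def using B X
      by (simp add: assoc_mult_mat[of "transpose_mat X" r n B n X r])
  qed
  have tS2: "transpose_mat S2 = S2"
  proof -
    have tP: "transpose_mat (transpose_mat P * B * P) = transpose_mat P * B * P"
    proof -
      have "transpose_mat (transpose_mat P * B * P) = transpose_mat P * transpose_mat (transpose_mat P * B)"
        by (rule transpose_mult[OF XB(2) P])
      also have "transpose_mat (transpose_mat P * B) = transpose_mat B * P"
        using transpose_mult[of "transpose_mat P" r n B n] P B by simp
      finally show ?thesis using B P
        by (simp add: assoc_mult_mat[of "transpose_mat P" r n B n P r])
    qed
    show ?thesis unfolding S2_def
      by (subst transpose_minus[of _ r r]) (use tP X P B in auto)
  qed
  have cmM: "cm M = M" "cm N = N" "cm S1 = S1" "cm S2 = S2"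
    unfolding M_def N_def S1_def S2_def using X P B cX cP
    by (auto simp: cm_mult cm_transpose cm_one cm_minus[of _ r r])
  have L: "Lmat n a lam r X P = four_block_mat M S1 S2 (-N)"
    unfolding Lmat_def M_def N_def S1_def S2_def B_def ..
  have E: "M * Xi + S1 * Ups = Xi * diagm r w \<and> S2 * Xi + (-N) * Ups = Ups * diagm r w"
  proof (rule append_rows_inj)
    show "(M * Xi + S1 * Ups) @\<^sub>r (S2 * Xi + (-N) * Ups) = (Xi * diagm r w) @\<^sub>r (Ups * diagm r w)"
      using eig unfolding L
      by (simp only: four_block_mult_append_rows[OF cM(1) cM(3) cM(4) _ Xi Ups] append_rows_mult[OF Xi Ups diagm_carrier]
          uminus_carrier_iff_mat cM(2))
  qed (use cM Xi Ups in auto)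
  define cw where "cw = (\<lambda>i. cnj (w i))"
  have F: "M * cm Xi + S1 * cm Ups = cm Xi * diagm r cw \<and> S2 * cm Xi + (-N) * cm Ups = cm Ups * diagm r cw"
  proof -
    have "cm (M * Xi + S1 * Ups) = cm (Xi * diagm r w)" "cm (S2 * Xi + (-N) * Ups) = cm (Ups * diagm r w)"
      using E by auto
    then show ?thesis using cM Xi Ups cmM
      by (simp add: cm_add[of _ r r] cm_mult cm_uminus cm_diagm cw_def)
  qed
  have O1: "transpose_mat Xi * Ups = transpose_mat Ups * Xi"
    by (rule eig_orth[OF cM Xi Ups Xi Ups tM tN tS1 tS2]) (use E ne1 in auto)
  have O2: "transpose_mat Xi * cm Ups = transpose_mat Ups * cm Xi"
    by (rule eig_orth[OF cM Xi Ups _ _ tM tN tS1 tS2]) (use E F ne2 Xi Ups in \<open>auto simp: cw_def\<close>)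
  obtain XiI where XiI: "XiI \<in> carrier_mat r r" "Xi * XiI = 1\<^sub>m r" "XiI * Xi = 1\<^sub>m r"
    using inv_ex[OF Xi inv] by blast
  have L1: "transpose_mat XiI * transpose_mat Xi = 1\<^sub>m r"
    using transpose_mult[OF Xi XiI(1)] XiI(2) by simp
  have L2: "cm Xi * cm XiI = 1\<^sub>m r"
    using cm_mult[of Xi XiI] XiI Xi cm_one by auto
  have tG: "transpose_mat (Gam * Xi) = transpose_mat Xi * transpose_mat Gam"
    by (rule transpose_mult[OF Gam Xi])
  have symG: "Gam = transpose_mat Gam"
  proof (rule cancel_both[of "transpose_mat Xi" r Xi])
    show "transpose_mat Xi * Gam * Xi = transpose_mat Xi * transpose_mat Gam * Xi"
      using O1 unfolding GX[symmetric] tG using Xi Gam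
      by (simp add: assoc_mult_mat[of "transpose_mat Xi" r r Gam r Xi r]
          assoc_mult_mat[of "transpose_mat Xi" r r "transpose_mat Gam" r Xi r])
  qed (use Xi Gam XiI L1 in auto)
  have cG: "cm Gam = transpose_mat Gam"
  proof (rule cancel_both[of "transpose_mat Xi" r "cm Xi"])
    have cU: "cm (Gam * Xi) = cm Gam * cm Xi" using Gam Xi by (simp add: cm_mult)
    show "transpose_mat Xi * cm Gam * cm Xi = transpose_mat Xi * transpose_mat Gam * cm Xi"
      using O2 unfolding cU GX[symmetric] tG using Xi Gam
      by (simp add: assoc_mult_mat[of "transpose_mat Xi" r r "cm Gam" r "cm Xi" r]
          assoc_mult_mat[of "transpose_mat Xi" r r "transpose_mat Gam" r "cm Xi" r])
  qed (use Xi Gam XiI L1 L2 in auto)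
  have realG: "cm Gam = Gam" using cG symG by simp
  have cAi: "cm (Ahalf_inv n a lam) = Ahalf_inv n a lam" "Ahalf_inv n a lam \<in> carrier_mat n n"
    by (simp only: Ahalf_inv_def cm_diagm_real, simp add: Ahalf_inv_def)
  have cAh: "cm (Ahalf n a lam) = Ahalf n a lam" "Ahalf n a lam \<in> carrier_mat n n"
    by (simp only: Ahalf_def cm_diagm_real, simp add: Ahalf_def)
  have X'c: "X' \<in> carrier_mat n r" unfolding X'def using cAi X P Gam by auto
  have P'c: "P' \<in> carrier_mat n r" unfolding P'def using cAh X'c X Gam by auto
  have cX': "cm X' = X'" unfolding X'def using cAi X P Gam cX cP realG
    by (simp add: cm_mult cm_add[of _ n r])
  have cP': "cm P' = P'" unfolding P'def using cAh X'c X Gam cX cX' realG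
    by (simp add: cm_mult cm_add[of _ n r] cm_uminus)
  show ?thesis using X'c P'c cX' cP' by auto
qed


theorem proposition6p5:
  fixes n r :: nat and a :: "nat \<Rightarrow> real" and lam :: real
    and X0 P0 :: "real mat" and w :: "nat \<Rightarrow> complex"
    and traj :: "nat \<Rightarrow> complex mat \<times> complex mat"
  assumes a_distinct: "\<forall>i<n. \<forall>j<n. i \<noteq> j \<longrightarrow> a i \<noteq> a j"
    and lam_gt: "\<forall>i<n. lam > a i"
    and X0_dim: "X0 \<in> carrier_mat n r" and P0_dim: "P0 \<in> carrier_mat n r"
    and stiefel: "transpose_mat X0 * X0 = 1\<^sub>m r"
    and cotangent: "transpose_mat X0 * P0 + transpose_mat P0 * X0 = 0\<^sub>m r r"
    and P0_set: "\<exists>Xt :: real mat. Xt \<in> carrier_mat n r \<and> transpose_mat Xt * Xt = 1\<^sub>m r \<and>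
        map_mat complex_of_real P0 =
          Ahalf n a lam * map_mat complex_of_real Xt
          - (1/2 :: complex) \<cdot>\<^sub>m (map_mat complex_of_real X0 *
             (transpose_mat (map_mat complex_of_real Xt) * Ahalf n a lam * map_mat complex_of_real X0
              + transpose_mat (map_mat complex_of_real X0) * Ahalf n a lam * map_mat complex_of_real Xt))"
    and partition: "char_poly (Lmat n a lam r (map_mat complex_of_real X0) (map_mat complex_of_real P0))
        = (\<Prod>i<r. [: - w i, 1 :] * [: w i, 1 :])"
    and w_distinct: "\<forall>i<r. \<forall>j<r. i \<noteq> j \<longrightarrow> w i \<noteq> w j"
    and w_sum: "\<forall>i<r. \<forall>j<r. w i + w j \<noteq> 0"
    and w_sum_cnj: "\<forall>i<r. \<forall>j<r. w i + cnj (w j) \<noteq> 0"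
    and traj_0: "traj 0 = (map_mat complex_of_real X0, map_mat complex_of_real P0)"
    and traj_step: "\<forall>k. neumann_step n a lam r w (traj k) (traj (Suc k))"
  shows "\<forall>k. real_mat (fst (traj k)) \<and> real_mat (snd (traj k))"
  proof -
  have inv: "fst (traj k) \<in> carrier_mat n r \<and> snd (traj k) \<in> carrier_mat n r \<and>
      cm (fst (traj k)) = fst (traj k) \<and> cm (snd (traj k)) = snd (traj k)" for k
  proof (induction k)
    case 0
    show ?case unfolding traj_0 using X0_dim P0_dim by (simp add: cm_of_real)
  next
    case (Suc k)
    have st: "neumann_step n a lam r w (fst (traj k), snd (traj k)) (fst (traj (Suc k)), snd (traj (Suc k)))"
      using traj_step by simp
    show ?case
      by (rule step_real[OF _ _ _ _ st]) (use Suc w_sum w_sum_cnj in auto)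
  qed
  show ?thesis using inv by (simp add: real_mat_iff)
qed

end
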